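(* Membership queries for $k$-safety hyperproperties are, in general, undecidable: there exist $k$, a finite alphabet $\Sigma$ and a $k$-safety hyperproperty $\mathbf{S}$ over $\Sigma$ such that it is undecidable, given a finite set $T \subseteq \Sigma^*$ of finite traces, whether $T \in \mathrm{Bad}(\mathbf{S})$.
   Context: For finite $T \subseteq \Sigma^*$ and $T' \subseteq \Sigma^\omega$, $T \le T'$ means every $t \in T$ is a prefix of some $t' \in T'$. A hyperproperty is a set $\mathbf{S} \subseteq \mathcal{P}(\Sigma^\omega)$; $\mathrm{Bad}(\mathbf{S}) = \{T \subseteq \Sigma^* \text{ finite} \mid \forall T' \subseteq \Sigma^\omega.\ T \le T' \Rightarrow T' \notin \mathbf{S}\}$. $\mathbf{S}$ is a $k$-safety hyperproperty if every $T' \subseteq \Sigma^\omega$ with $T' \notin \mathbf{S}$ has some $T \in \mathrm{Bad}(\mathbf{S})$ with $|T| \le k$ and $T \le T'$. *)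

theory Defs
  imports Main "HOL-Library.Nat_Bijection"
begin

datatype recf =
    Zero
  | Succ
  | Proj nat
  | Comp recf "recf list"
  | Prec recf recf
  | Mu recf

inductive rec_eval :: "recf \<Rightarrow> nat list \<Rightarrow> nat \<Rightarrow> bool" where
  zero: "rec_eval Zero xs 0"
| succ: "rec_eval Succ (x # xs) (Suc x)"
| proj: "i < length xs \<Longrightarrow> rec_eval (Proj i) xs (xs ! i)"
| comp: "list_all2 (\<lambda>g y. rec_eval g xs y) gs ys \<Longrightarrow> rec_eval f ys z
          \<Longrightarrow> rec_eval (Comp f gs) xs z"
| prec0: "rec_eval f xs y \<Longrightarrow> rec_eval (Prec f g) (0 # xs) y"
| precS: "rec_eval (Prec f g) (n # xs) y \<Longrightarrow> rec_eval g (n # y # xs) z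
          \<Longrightarrow> rec_eval (Prec f g) (Suc n # xs) z"
| mu: "rec_eval f (n # xs) 0 \<Longrightarrow> (\<forall>m<n. \<exists>y. rec_eval f (m # xs) (Suc y))
          \<Longrightarrow> rec_eval (Mu f) xs n"

definition decidable_on :: "nat set \<Rightarrow> (nat \<Rightarrow> bool) \<Rightarrow> bool" where
  "decidable_on D P \<longleftrightarrow> (\<exists>f. \<forall>x\<in>D. rec_eval f [x] (if P x then 1 else 0))"

definition omega_words :: "nat set \<Rightarrow> (nat \<Rightarrow> nat) set" where
  "omega_words Alph = {w. \<forall>i. w i \<in> Alph}"

definition is_prefix :: "nat list \<Rightarrow> (nat \<Rightarrow> nat) \<Rightarrow> bool" where
  "is_prefix t w \<longleftrightarrow> (\<forall>i<length t. t ! i = w i)"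

definition trace_le :: "nat list set \<Rightarrow> (nat \<Rightarrow> nat) set \<Rightarrow> bool" where
  "trace_le T T' \<longleftrightarrow> (\<forall>t\<in>T. \<exists>t'\<in>T'. is_prefix t t')"

definition hyperproperty :: "nat set \<Rightarrow> (nat \<Rightarrow> nat) set set \<Rightarrow> bool" where
  "hyperproperty Alph S \<longleftrightarrow> S \<subseteq> Pow (omega_words Alph)"

definition Bad :: "nat set \<Rightarrow> (nat \<Rightarrow> nat) set set \<Rightarrow> nat list set set" where
  "Bad Alph S = {T. finite T \<and> T \<subseteq> lists Alph \<and>
     (\<forall>T'. T' \<subseteq> omega_words Alph \<longrightarrow> trace_le T T' \<longrightarrow> T' \<notin> S)}"

definition k_safety :: "nat set \<Rightarrow> nat \<Rightarrow> (nat \<Rightarrow> nat) set set \<Rightarrow> bool" where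
  "k_safety Alph k S \<longleftrightarrow> hyperproperty Alph S \<and>
     (\<forall>T'. T' \<subseteq> omega_words Alph \<longrightarrow> T' \<notin> S \<longrightarrow>
        (\<exists>T\<in>Bad Alph S. card T \<le> k \<and> trace_le T T'))"

definition encode_traces :: "nat list set \<Rightarrow> nat" where
  "encode_traces T = set_encode (list_encode ` T)"

definition trace_set_codes :: "nat set \<Rightarrow> nat set" where
  "trace_set_codes Alph = encode_traces ` {T. finite T \<and> T \<subseteq> lists Alph}"

end

theory Submission
  imports Defs "HOL-Library.Countable"
begin

instance recf :: countable
  by countable_datatype

lemma list_all2_det:
  "list_all2 (\<lambda>g y. R g y \<and> (\<forall>z. R g z \<longrightarrow> y = z)) gs ys \<Longrightarrow> list_all2 R gs ys' \<Longrightarrow> ys = ys'"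
proof (induction arbitrary: ys' rule: list_all2_induct)
  case Nil
  then show ?case by simp
next
  case (Cons x xs y ys)
  from Cons.prems obtain y' ys1 where e: "ys' = y' # ys1" and r: "R x y'" and l: "list_all2 R xs ys1"
    by (cases ys') auto
  have "y = y'" using Cons.hyps(1) r by blast
  moreover have "ys = ys1" using Cons.IH l by blast
  ultimately show ?case using e by simp
qed

inductive_cases ZeroE: "rec_eval Zero xs y"
inductive_cases SuccE: "rec_eval Succ xs y"
inductive_cases ProjE: "rec_eval (Proj i) xs y"
inductive_cases CompE: "rec_eval (Comp f gs) xs y"
inductive_cases Prec0E: "rec_eval (Prec f g) (0 # xs) y"
inductive_cases PrecSE: "rec_eval (Prec f g) (Suc n # xs) y"
inductive_cases MuE: "rec_eval (Mu f) xs y"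

lemma rec_eval_det:
  "rec_eval f xs y \<Longrightarrow> rec_eval f xs z0 \<Longrightarrow> y = z0"
proof (induction arbitrary: z0 rule: rec_eval.induct)
  case (zero xs)
  from zero.prems show ?case by (rule ZeroE) simp
next
  case (succ x xs)
  from succ.prems show ?case by (rule SuccE) simp
next
  case (proj i xs)
  from proj.prems show ?case by (rule ProjE) simp
next
  case (comp xs gs ys f z)
  from comp(4) obtain ys' where a: "list_all2 (\<lambda>g y. rec_eval g xs y) gs ys'" and b: "rec_eval f ys' z0"
    by (rule CompE)
  have "ys = ys'" using list_all2_det[OF comp(1) a] .
  then show ?case using comp(2) b by simp
next
  case (prec0 f xs y g)
  from prec0(3) have "rec_eval f xs z0" by (rule Prec0E)
  then show ?case by (rule prec0(2))
next
  case (precS f g n xs y z)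
  from precS(5) obtain y' where y': "rec_eval (Prec f g) (n # xs) y'" and z': "rec_eval g (n # y' # xs) z0"
    by (rule PrecSE)
  have "y = y'" using precS(3)[OF y'] .
  then show ?case using precS(4) z' by simp
next
  case (mu f n xs)
  from mu(4) have a: "rec_eval f (z0 # xs) 0" and b: "\<forall>m<z0. \<exists>y. rec_eval f (m # xs) (Suc y)"
    by (rule MuE, simp)+
  show ?case
  proof (rule ccontr)
    assume "n \<noteq> z0"
    then consider "z0 < n" | "n < z0" by linarith
    then show False
    proof cases
      case 1
      then obtain y where "\<forall>z1. rec_eval f (z0 # xs) z1 \<longrightarrow> Suc y = z1" using mu(3) by blast
      then show False using a by blast
    next
      case 2
      then obtain y where "rec_eval f (n # xs) (Suc y)" using b by blast
      then show False using mu(2) by fastforce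
    qed
  qed
qed

definition SA :: "nat set \<Rightarrow> (nat \<Rightarrow> nat) set set" where
  "SA A = {T'. T' \<subseteq> omega_words {0,1} \<and> (\<forall>w\<in>T'. \<forall>n\<in>A. \<not> is_prefix (replicate n 0 @ [1]) w)}"

definition Tn :: "nat \<Rightarrow> nat list set" where
  "Tn n = {replicate n 0 @ [1]}"

lemma Tn_lists: "Tn n \<subseteq> lists {0,1}"
  by (auto simp: Tn_def)

lemma Tn_Bad_in: "n \<in> A \<Longrightarrow> Tn n \<in> Bad {0,1} (SA A)"
  unfolding Bad_def
proof (intro CollectI conjI allI impI)
  assume nA: "n \<in> A"
  show "finite (Tn n)" by (simp add: Tn_def)
  show "Tn n \<subseteq> lists {0,1}" by (rule Tn_lists)
  fix T' assume "T' \<subseteq> omega_words {0,1}" "trace_le (Tn n) T'"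
  then obtain w where "w \<in> T'" "is_prefix (replicate n 0 @ [1]) w"
    by (auto simp: trace_le_def Tn_def)
  then show "T' \<notin> SA A" using nA unfolding SA_def by blast
qed

lemma Tn_Bad_out: "n \<notin> A \<Longrightarrow> Tn n \<notin> Bad {0,1} (SA A)"
proof
  assume nA: "n \<notin> A" and B: "Tn n \<in> Bad {0,1} (SA A)"
  define w0 where "w0 = (\<lambda>i::nat. if i = n then 1 else (0::nat))"
  have om: "{w0} \<subseteq> omega_words {0,1}" by (auto simp: omega_words_def w0_def)
  have pre: "is_prefix (replicate n 0 @ [1]) w0"
    by (auto simp: is_prefix_def w0_def nth_append less_Suc_eq)
  have le: "trace_le (Tn n) {w0}" using pre by (auto simp: trace_le_def Tn_def)
  have "\<forall>m\<in>A. \<not> is_prefix (replicate m 0 @ [1]) w0"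
  proof
    fix m assume "m \<in> A"
    show "\<not> is_prefix (replicate m 0 @ [1]) w0"
    proof
      assume "is_prefix (replicate m 0 @ [1]) w0"
      then have "(replicate m 0 @ [1]) ! m = w0 m" by (auto simp: is_prefix_def)
      then have "m = n" by (auto simp: w0_def nth_append split: if_splits)
      with \<open>m \<in> A\<close> nA show False by simp
    qed
  qed
  then have "{w0} \<in> SA A" using om by (auto simp: SA_def)
  moreover from B have "\<forall>T'. T' \<subseteq> omega_words {0,1} \<longrightarrow> trace_le (Tn n) T' \<longrightarrow> T' \<notin> SA A"
    by (simp add: Bad_def)
  ultimately show False using om le by blast
qed

lemma SA_safety: "k_safety {0,1} 1 (SA A)"
  unfolding k_safety_def
proof (intro conjI allI impI)
  show "hyperproperty {0,1} (SA A)" by (auto simp: hyperproperty_def SA_def)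
next
  fix T' assume om: "T' \<subseteq> omega_words {0,1}" and ns: "T' \<notin> SA A"
  then obtain w n where w: "w \<in> T'" "n \<in> A" "is_prefix (replicate n 0 @ [1]) w"
    by (auto simp: SA_def)
  show "\<exists>T\<in>Bad {0,1} (SA A). card T \<le> 1 \<and> trace_le T T'"
  proof (rule bexI[of _ "Tn n"])
    show "Tn n \<in> Bad {0,1} (SA A)" using Tn_Bad_in[OF w(2)] .
    show "card (Tn n) \<le> 1 \<and> trace_le (Tn n) T'"
      using w by (auto simp: Tn_def trace_le_def)
  qed
qed

lemma encode_inj: "finite T \<Longrightarrow> finite T2 \<Longrightarrow> encode_traces T = encode_traces T2 \<Longrightarrow> T = T2"
proof -
  assume f: "finite T" "finite T2" and e: "encode_traces T = encode_traces T2"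
  have "list_encode ` T = list_encode ` T2"
    using e f set_encode_eq[of "list_encode ` T" "list_encode ` T2"] by (simp add: encode_traces_def)
  then show "T = T2" using inj_image_eq_iff[OF inj_list_encode] by blast
qed

theorem corollary3:
  shows "\<exists>k Alph S. finite Alph \<and> k_safety Alph k S \<and>
     \<not> decidable_on (trace_set_codes Alph)
         (\<lambda>n. \<exists>T. finite T \<and> T \<subseteq> lists Alph \<and> encode_traces T = n \<and> T \<in> Bad Alph S)"
proof (rule ccontr)
  assume nt: "\<not> ?thesis"
  define P where "P A = (\<lambda>n. \<exists>T. finite T \<and> T \<subseteq> lists {0,1} \<and> encode_traces T = n \<and> T \<in> Bad {0,1} (SA A))" for A
  have dec: "decidable_on (trace_set_codes {0,1}) (P A)" for A
  proof (rule ccontr)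
    assume "\<not> decidable_on (trace_set_codes {0,1}) (P A)"
    then have "\<exists>k Alph S. finite Alph \<and> k_safety Alph k S \<and>
     \<not> decidable_on (trace_set_codes Alph)
         (\<lambda>n. \<exists>T. finite T \<and> T \<subseteq> lists Alph \<and> encode_traces T = n \<and> T \<in> Bad Alph S)"
      using SA_safety[of A]
      by (intro exI[of _ 1] exI[of _ "{0,1}"] exI[of _ "SA A"]) (simp add: P_def)
    with nt show False by blast
  qed
  define c where "c n = encode_traces (Tn n)" for n
  have cD: "c n \<in> trace_set_codes {0,1}" for n
    using Tn_lists by (auto simp: c_def trace_set_codes_def Tn_def)
  have Pc: "P A (c n) \<longleftrightarrow> n \<in> A" for A n
  proof
    assume "P A (c n)"
    then obtain T where T: "finite T" "encode_traces T = c n" "T \<in> Bad {0,1} (SA A)"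
      by (auto simp: P_def)
    have "finite (Tn n)" by (simp add: Tn_def)
    then have "T = Tn n" using encode_inj[of T "Tn n"] T by (simp add: c_def)
    then show "n \<in> A" using Tn_Bad_out T(3) by blast
  next
    assume "n \<in> A"
    then have "Tn n \<in> Bad {0,1} (SA A)" by (rule Tn_Bad_in)
    then show "P A (c n)" unfolding P_def c_def
      using Tn_lists[of n] by (intro exI[of _ "Tn n"]) (simp add: Tn_def)
  qed
  have "\<forall>A. \<exists>f. \<forall>x\<in>trace_set_codes {0,1}. rec_eval f [x] (if P A x then 1 else 0)"
    using dec unfolding decidable_on_def by blast
  then have "\<exists>F. \<forall>A. \<forall>x\<in>trace_set_codes {0,1}. rec_eval (F A) [x] (if P A x then 1 else 0)"
    by (rule choice)
  then obtain F where F: "\<forall>A. \<forall>x\<in>trace_set_codes {0,1}. rec_eval (F A) [x] (if P A x then 1 else 0)"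
    by blast
  have Fc: "rec_eval (F A) [c n] (if n \<in> A then 1 else 0)" for A n
  proof -
    have "rec_eval (F A) [c n] (if P A (c n) then 1 else 0)" using F cD[of n] by blast
    then show ?thesis using Pc[of A n] by simp
  qed
  have rec: "A = {n. rec_eval (F A) [c n] 1}" for A
  proof (intro set_eqI iffI)
    fix n assume "n \<in> A"
    then show "n \<in> {n. rec_eval (F A) [c n] 1}" using Fc[of A n] by simp
  next
    fix n assume "n \<in> {n. rec_eval (F A) [c n] 1}"
    then have h: "rec_eval (F A) [c n] 1" by simp
    show "n \<in> A"
    proof (rule ccontr)
      assume "n \<notin> A"
      then have "rec_eval (F A) [c n] 0" using Fc[of A n] by simp
      with h have "(1::nat) = 0" by (rule rec_eval_det)
      then show False by simp
    qed
  qed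
  have "inj (\<lambda>A. to_nat (F A))"
  proof (rule injI)
    fix A B assume "to_nat (F A) = to_nat (F B)"
    then have e: "F A = F B" by simp
    have "A = {n. rec_eval (F A) [c n] 1}" by (rule rec)
    also have "\<dots> = {n. rec_eval (F B) [c n] 1}" using e by simp
    also have "\<dots> = B" by (rule rec[symmetric])
    finally show "A = B" .
  qed
  then have "surj (inv (\<lambda>A. to_nat (F A)))" by (rule inj_imp_surj_inv)
  then have "inv (\<lambda>A. to_nat (F A)) ` UNIV = Pow UNIV" by simp
  then show False using Cantors_theorem[of "UNIV :: nat set"] by blast
qed

end
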